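(* Let $\psi$ be a reduced function. Then $w_\psi$ is periodic if and only if $\psi(n)=n-1$ for every sufficiently large integer $n$.
   Context: $\mathcal{A}$ is an alphabet disjoint from $\mathbb{N}^*=\{1,2,\dots\}$. A function is a map $\psi:\mathbb{N}^*\to\mathbb{N}^*\sqcup\mathcal{A}$ such that for every $n\ge1$ either $\psi(n)\in\mathcal{A}$ or $1\le\psi(n)\le n-1$. Associated words: $\pi_1=\varepsilon$ and, for $i\ge1$: if $\psi(i)\in\mathcal{A}$, $\pi_{i+1}=\pi_i\psi(i)\pi_i$; if $\psi(i)\in\mathbb{N}^*$, writing $\pi_i=\pi_{\psi(i)}b_i$ (where $\pi_{\psi(i)}$ is a prefix of $\pi_i$), $\pi_{i+1}=\pi_ib_i$. Each $\pi_i$ is a proper prefix of $\pi_{i+1}$, and $w_\psi$ is the infinite word having all $\pi_i$ as prefixes. Let $(t_k)_{k\ge0}$ be the (finite or infinite) family, in increasing order, of all $n\ge1$ with $\psi(n)\in\mathcal{A}$ or $1\le\psi(n)\le n-2$. $\psi$ is reduced if for every $k\ge1$ such that $t_k$ exists: $\psi(t_k)\ne\psi(t_{k-1})$, and either $\psi(t_k)\in\mathcal{A}$ or $\psi(t_k)<t_{k-1}$. *)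

theory Defs
  imports Main
begin

(* A "function" psi : N* -> N* + A is modelled as psi :: nat => 'a + nat,
   with Inl a for a letter of the alphabet 'a and Inr k for a positive integer k.
   The value psi 0 is irrelevant. *)

definition is_function :: "(nat \<Rightarrow> 'a + nat) \<Rightarrow> bool" where
  "is_function psi \<longleftrightarrow>
     (\<forall>n\<ge>1. case psi n of Inl _ \<Rightarrow> True | Inr k \<Rightarrow> 1 \<le> k \<and> k \<le> n - 1)"

(* pis psi m = [pi_1, ..., pi_(m+1)] *)
primrec pis :: "(nat \<Rightarrow> 'a + nat) \<Rightarrow> nat \<Rightarrow> 'a list list" where
  "pis psi 0 = [[]]"
| "pis psi (Suc m) =
     (let L = pis psi m; p = last L
      in L @ [case psi (Suc m) of
                Inl a \<Rightarrow> p @ [a] @ p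
              | Inr k \<Rightarrow> p @ drop (length (L ! (k - 1))) p])"

definition assoc_word :: "(nat \<Rightarrow> 'a + nat) \<Rightarrow> nat \<Rightarrow> 'a list" where
  "assoc_word psi i = last (pis psi (i - 1))"

definition w_psi :: "(nat \<Rightarrow> 'a + nat) \<Rightarrow> nat \<Rightarrow> 'a" where
  "w_psi psi = (THE w. \<forall>i\<ge>1. \<forall>j<length (assoc_word psi i). w j = assoc_word psi i ! j)"

(* the set of all t_k *)
definition tset :: "(nat \<Rightarrow> 'a + nat) \<Rightarrow> nat set" where
  "tset psi = {n. n \<ge> 1 \<and> (case psi n of Inl _ \<Rightarrow> True | Inr k \<Rightarrow> 1 \<le> k \<and> k + 2 \<le> n)}"

(* reduced: for consecutive elements t_{k-1} = m < n = t_k of the family *)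
definition reduced :: "(nat \<Rightarrow> 'a + nat) \<Rightarrow> bool" where
  "reduced psi \<longleftrightarrow>
     (\<forall>m n. m \<in> tset psi \<and> n \<in> tset psi \<and> m < n \<and> (\<forall>l. m < l \<and> l < n \<longrightarrow> l \<notin> tset psi)
        \<longrightarrow> psi n \<noteq> psi m \<and>
            (case psi n of Inl _ \<Rightarrow> True | Inr k \<Rightarrow> k < m))"

definition periodic_word :: "(nat \<Rightarrow> 'a) \<Rightarrow> bool" where
  "periodic_word w \<longleftrightarrow> (\<exists>p>0. \<forall>n. w (n + p) = w n)"

end

theory Submission
  imports Defs
begin

lemma pis_len: "length (pis psi m) = Suc m"
  by (induction m) (auto simp: Let_def)

lemma pis_Suc_app: "pis psi (Suc m) = pis psi m @ [last (pis psi (Suc m))]"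
  by (simp add: Let_def)

lemma pis_nth: "j \<le> m \<Longrightarrow> pis psi m ! j = last (pis psi j)"
proof (induction m)
  case 0
  then show ?case by simp
next
  case (Suc m)
  show ?case
  proof (cases "j = Suc m")
    case True
    have "pis psi (Suc m) \<noteq> []" using pis_len[of psi "Suc m"] by (metis list.size(3) nat.distinct(1))
    then show ?thesis using True pis_len[of psi "Suc m"] last_conv_nth[of "pis psi (Suc m)"] by (simp del: pis.simps)
  next
    case False
    then have "j \<le> m" using Suc.prems by simp
    then have "pis psi (Suc m) ! j = pis psi m ! j"
      using pis_len[of psi m] by (subst pis_Suc_app) (simp add: nth_append)
    then show ?thesis using Suc.IH \<open>j \<le> m\<close> by simp
  qed
qed

definition palw :: "(nat \<Rightarrow> 'b) \<Rightarrow> nat \<Rightarrow> bool" where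
  "palw w l \<longleftrightarrow> (\<forall>x<l. w x = w (l - 1 - x))"

definition perw :: "(nat \<Rightarrow> 'b) \<Rightarrow> nat \<Rightarrow> nat \<Rightarrow> bool" where
  "perw w l q \<longleftrightarrow> (\<forall>x. x + q < l \<longrightarrow> w x = w (x + q))"

lemma G_border: "palw w a \<Longrightarrow> palw w b \<Longrightarrow> a \<le> b \<Longrightarrow> perw w b (b - a)"
  unfolding palw_def perw_def
proof (intro allI impI)
  fix x assume pa: "\<forall>x<a. w x = w (a - 1 - x)" and pb: "\<forall>x<b. w x = w (b - 1 - x)"
    and ab: "a \<le> b" and x: "x + (b - a) < b"
  have xb: "x + (b - a) < b" using x by simp
  have xa: "x < a" using x ab by simp
  have "w (x + (b - a)) = w (b - 1 - (x + (b - a)))" using pb xb by blast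
  also have "b - 1 - (x + (b - a)) = a - 1 - x" using x ab by simp
  also have "w (a - 1 - x) = w x" using pa xa by metis
  finally show "w x = w (x + (b - a))" by simp
qed

lemma G_palborder: "palw w b \<Longrightarrow> perw w b q \<Longrightarrow> q \<le> b \<Longrightarrow> palw w (b - q)"
  unfolding palw_def perw_def
proof (intro allI impI)
  fix x assume pb: "\<forall>x<b. w x = w (b - 1 - x)" and pq: "\<forall>x. x + q < b \<longrightarrow> w x = w (x + q)"
    and qb: "q \<le> b" and x: "x < b - q"
  have "x + q < b" using x by simp
  have "w x = w (x + q)" using pq x by simp
  also have "\<dots> = w (b - 1 - (x + q))" using pb \<open>x + q < b\<close> by blast
  also have "b - 1 - (x + q) = b - q - 1 - x" by simp
  finally show "w x = w (b - q - 1 - x)" .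
qed

lemma G_prefix: "perw w b q \<Longrightarrow> a \<le> b \<Longrightarrow> perw w a q"
  unfolding perw_def by auto

lemma G_refl: "palw w a \<Longrightarrow> palw w b \<Longrightarrow> a \<le> b \<Longrightarrow> b \<le> 2 * a \<Longrightarrow> palw w (2 * a - b)"
proof -
  assume h: "palw w a" "palw w b" "a \<le> b" "b \<le> 2 * a"
  have "perw w a (b - a)" using G_border[OF h(1-3)] G_prefix h(3) by blast
  then have "palw w (a - (b - a))" using G_palborder[of w a "b - a"] h by simp
  moreover have "a - (b - a) = 2 * a - b" using h by simp
  ultimately show ?thesis by simp
qed

lemma G_ext: "palw w a \<Longrightarrow> perw w b q \<Longrightarrow> b = a + q \<Longrightarrow> q \<le> a + 1 \<Longrightarrow> palw w b"
  unfolding palw_def perw_def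
proof (intro allI impI)
  fix x assume pa: "\<forall>x<a. w x = w (a - 1 - x)" and pq: "\<forall>x. x + q < b \<longrightarrow> w x = w (x + q)"
    and b: "b = a + q" and qa: "q \<le> a + 1" and x: "x < b"
  show "w x = w (b - 1 - x)"
  proof (cases "q \<le> x")
    case True
    have "x - q < a" using x b True by simp
    have "w (x - q) = w x" using pq[rule_format, of "x - q"] True x by simp
    moreover have "w (x - q) = w (a - 1 - (x - q))" using pa \<open>x - q < a\<close> by blast
    moreover have "a - 1 - (x - q) = b - 1 - x" using b True x by simp
    ultimately show ?thesis by simp
  next
    case False
    show ?thesis
    proof (cases "q \<le> b - 1 - x")
      case True
      have "w (b - 1 - x - q) = w (b - 1 - x)" using pq[rule_format, of "b - 1 - x - q"] True x by simp
      moreover have "b - 1 - x - q = a - 1 - x" using b by simp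
      moreover have "x < a \<Longrightarrow> w x = w (a - 1 - x)" using pa by blast
      moreover have "x \<ge> a \<Longrightarrow> b - 1 - x = x" using False qa b by simp
      ultimately show ?thesis by (cases "x < a") auto
    next
      case False2: False
      then have "b - 1 - x = x" using False qa b x by simp
      then show ?thesis by simp
    qed
  qed
qed

lemma G_mult: "perw w b q \<Longrightarrow> perw w b (c * q)"
proof (induction c)
  case 0 then show ?case by (simp add: perw_def)
next
  case (Suc c)
  show ?case unfolding perw_def
  proof (intro allI impI)
    fix x assume x: "x + Suc c * q < b"
    have "w x = w (x + q)" using Suc.prems x unfolding perw_def by simp
    also have "\<dots> = w (x + q + c * q)" using Suc.IH Suc.prems x unfolding perw_def by (simp add: add.assoc)
    finally show "w x = w (x + Suc c * q)" by (simp add: add.assoc)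
  qed
qed

lemma perwD: "perw w n p \<Longrightarrow> x + p < n \<Longrightarrow> w x = w (x + p)"
  unfolding perw_def by blast

lemma G_FW_step: assumes "perw w n p" "perw w n q" "p < q" "p + q \<le> n" shows "perw w n (q - p)"
  unfolding perw_def
proof (intro allI impI)
  fix x assume x: "x + (q - p) < n"
  show "w x = w (x + (q - p))"
  proof (cases "x + q < n")
    case True
    have c1: "x + (q - p) + p < n" using True assms(3) by simp
    have e1: "w (x + (q - p)) = w (x + (q - p) + p)" using perwD[OF assms(1) c1] .
    have e2: "x + (q - p) + p = x + q" using assms(3) by simp
    have e3: "w x = w (x + q)" using perwD[OF assms(2) True] .
    show ?thesis using e1 e2 e3 by metis
  next
    case False
    then have xp: "x \<ge> p" using assms(4) by simp
    have c1: "x - p + p < n" using x xp assms(3) by simp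
    have e1: "w (x - p) = w (x - p + p)" using perwD[OF assms(1) c1] .
    have c2: "x - p + q < n" using x xp assms(3) by simp
    have e2: "w (x - p) = w (x - p + q)" using perwD[OF assms(2) c2] .
    have e3: "x - p + p = x" "x - p + q = x + (q - p)" using xp assms(3) by simp_all
    show ?thesis using e1 e2 e3 by metis
  qed
qed

lemma G_FW: "perw w n p \<Longrightarrow> perw w n q \<Longrightarrow> p + q \<le> n \<Longrightarrow> perw w n (gcd p q)"
proof (induction "p + q" arbitrary: p q rule: less_induct)
  case less
  show ?case
  proof (cases "p = 0 \<or> q = 0 \<or> p = q")
    case True
    then show ?thesis using less.prems by auto
  next
    case False
    show ?thesis
    proof (cases "p < q")
      case True
      have pq: "perw w n (q - p)" using G_FW_step[OF less.prems(1,2) True less.prems(3)] .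
      have lt: "p + (q - p) < p + q" using False True by simp
      have le: "p + (q - p) \<le> n" using less.prems(3) by simp
      have "perw w n (gcd p (q - p))" using less.hyps[OF lt less.prems(1) pq le] .
      moreover have "gcd (q - p) p = gcd q p" using gcd_diff1_nat[of p q] True by simp
      ultimately show ?thesis by (simp add: gcd.commute)
    next
      case False2: False
      then have qp: "q < p" using False by simp
      have pq: "perw w n (p - q)" using G_FW_step[OF less.prems(2,1) qp] less.prems(3) by simp
      have lt: "(p - q) + q < p + q" using False qp by simp
      have le: "(p - q) + q \<le> n" using less.prems(3) by simp
      have "perw w n (gcd (p - q) q)" using less.hyps[OF lt pq less.prems(2) le] .
      moreover have "gcd (p - q) q = gcd p q" using gcd_diff1_nat[of q p] qp by simp
      ultimately show ?thesis by simp
    qed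
  qed
qed

lemma G_extend: assumes "perw w b D" "perw w a h" "D \<le> a" "a \<le> b" "h dvd D" "0 < D"
  shows "perw w b h"
  unfolding perw_def
proof (intro allI)
  fix y
  show "y + h < b \<longrightarrow> w y = w (y + h)"
  proof (induction y rule: less_induct)
    case (less y)
    show ?case
    proof
      assume yb: "y + h < b"
      show "w y = w (y + h)"
      proof (cases "y + h < a")
        case True then show ?thesis using assms(2) unfolding perw_def by simp
      next
        case False
        show ?thesis
        proof (cases "D \<le> y")
          case True
          have "w (y - D) = w (y - D + D)" using assms(1) yb True unfolding perw_def by simp
          moreover have "w (y - D + h) = w (y - D + h + D)" using assms(1) yb True unfolding perw_def by simp
          moreover have "w (y - D) = w (y - D + h)" using less.IH[of "y - D"] assms(6) True yb by simp
          ultimately show ?thesis using True by (simp add: add.commute add.left_commute)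
        next
          case False2: False
          have hD: "h \<le> D" using assms(5,6) by (simp add: dvd_imp_le)
          have ge: "y + h \<ge> D" using False assms(3) by simp
          have "w (y + h - D) = w (y + h - D + D)" using assms(1) yb ge unfolding perw_def by simp
          obtain c where c: "D = h * c" using assms(5) by (auto simp: dvd_def)
          have "perw w a ((c - 1) * h)" using G_mult[OF assms(2)] by blast
          moreover have "(c - 1) * h = D - h" using c by (simp add: algebra_simps diff_mult_distrib2)
          ultimately have "perw w a (D - h)" by simp
          then have "w (y + h - D) = w (y + h - D + (D - h))" using False2 assms(3) ge hD unfolding perw_def by simp
          then show ?thesis using \<open>w (y + h - D) = w (y + h - D + D)\<close> ge hD by simp
        qed
      qed
    qed
  qed
qed

lemma G_glue: assumes "c < b" "c + b \<le> n" "\<And>t. t < n - b \<Longrightarrow> w (b + t) = w (c + t)" "palw w n"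
  shows "perw w n (b - c)"
proof -
  have A1: "w x = w (x + (b - c))" if "x + (b - c) < n" "c \<le> x" for x
  proof -
    have "x - c < n - b" using that assms(1) by simp
    then have "w (b + (x - c)) = w (c + (x - c))" using assms(3) by simp
    moreover have "b + (x - c) = x + (b - c)" using that assms(1) by simp
    ultimately show ?thesis using that by simp
  qed
  show ?thesis unfolding perw_def
  proof (intro allI impI)
    fix x assume x: "x + (b - c) < n"
    show "w x = w (x + (b - c))"
    proof (cases "c \<le> x")
      case True then show ?thesis using A1 x by simp
    next
      case False
      define y where "y = n - 1 - x - (b - c)"
      have yc: "c \<le> y" using False assms(1,2) x unfolding y_def by simp
      have yb: "y + (b - c) = n - 1 - x" using x unfolding y_def by simp
      have "x < n" using x by simp
      have "w y = w (y + (b - c))" using A1[of y] yc yb x by simp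
      moreover have "w x = w (n - 1 - x)" using assms(4) \<open>x < n\<close> unfolding palw_def by blast
      moreover have "w (x + (b - c)) = w (n - 1 - (x + (b - c)))" using assms(4) x unfolding palw_def by blast
      moreover have "n - 1 - (x + (b - c)) = y" unfolding y_def by simp
      ultimately show ?thesis using yb by simp
    qed
  qed
qed

locale F =
  fixes psi :: "nat \<Rightarrow> 'a + nat"
  assumes isf: "is_function psi"
begin

definition P :: "nat \<Rightarrow> 'a list" where "P i = assoc_word psi i"
abbreviation L :: "nat \<Rightarrow> nat" where "L i \<equiv> length (P i)"

lemma P1: "P 1 = []" by (simp add: P_def assoc_word_def)
lemma P1': "P (Suc 0) = []" by (simp add: P_def assoc_word_def)

lemma psi_Inr: "n \<ge> 1 \<Longrightarrow> psi n = Inr k \<Longrightarrow> 1 \<le> k \<and> k \<le> n - 1"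
  using isf unfolding is_function_def by (metis sum.simps(6))

lemma psi1: "\<exists>a. psi 1 = Inl a"
  using psi_Inr[of 1] by (cases "psi 1") auto

lemma P_Suc: assumes "i \<ge> 1"
  shows "P (Suc i) = (case psi i of Inl a \<Rightarrow> P i @ a # P i
                        | Inr k \<Rightarrow> P i @ drop (L k) (P i))"
proof -
  obtain i' where i': "i = Suc i'" using assms by (cases i) auto
  have "P (Suc i) = last (pis psi (Suc i'))" by (simp add: P_def assoc_word_def i')
  also have "\<dots> = (case psi i of Inl a \<Rightarrow> last (pis psi i') @ [a] @ last (pis psi i')
     | Inr k \<Rightarrow> last (pis psi i') @ drop (length (pis psi i' ! (k - 1))) (last (pis psi i')))"
    by (simp add: Let_def i')
  also have "\<dots> = (case psi i of Inl a \<Rightarrow> P i @ a # P i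
                        | Inr k \<Rightarrow> P i @ drop (L k) (P i))"
  proof (cases "psi i")
    case (Inl a)
    then show ?thesis by (simp add: P_def assoc_word_def i')
  next
    case (Inr k)
    then have "1 \<le> k" "k \<le> i'" using psi_Inr[OF assms] i' by auto
    then have "pis psi i' ! (k - 1) = P k" using pis_nth[of "k-1" i' psi]
      by (simp add: P_def assoc_word_def)
    then show ?thesis using Inr by (simp add: P_def assoc_word_def i')
  qed
  finally show ?thesis .
qed

lemma L_Suc_Inl: "i \<ge> 1 \<Longrightarrow> psi i = Inl a \<Longrightarrow> L (Suc i) = 2 * L i + 1"
  using P_Suc by simp

lemma L_Suc_Inr0: "i \<ge> 1 \<Longrightarrow> psi i = Inr k \<Longrightarrow> L (Suc i) = L i + (L i - L k)"
  using P_Suc by simp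

lemma L_mono_aux: "\<forall>j. 1 \<le> j \<and> j < n \<longrightarrow> L j < L (Suc j)"
proof (induction n)
  case 0
  then show ?case by simp
next
  case (Suc n)
  have sm: "L a < L b" if "1 \<le> a" "a < b" "b \<le> n" for a b
    using that
  proof (induction b)
    case 0 then show ?case by simp
  next
    case (Suc b)
    show ?case
    proof (cases "a = b")
      case True then show ?thesis using Suc.prems \<open>\<forall>j. 1 \<le> j \<and> j < n \<longrightarrow> L j < L (Suc j)\<close> by auto
    next
      case False
      then have "L a < L b" using Suc by auto
      moreover have "L b < L (Suc b)" using Suc.prems False \<open>\<forall>j. 1 \<le> j \<and> j < n \<longrightarrow> L j < L (Suc j)\<close> by auto
      ultimately show ?thesis by simp
    qed
  qed
  show ?case
  proof (intro allI impI)
    fix j assume j: "1 \<le> j \<and> j < Suc n"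
    show "L j < L (Suc j)"
    proof (cases "j < n")
      case True then show ?thesis using Suc.IH j by blast
    next
      case False
      then have jn: "j = n" using j by simp
      show ?thesis
      proof (cases "psi j")
        case (Inl a) then show ?thesis using L_Suc_Inl j by simp
      next
        case (Inr k)
        then have "1 \<le> k" "k < j" using psi_Inr[of j k] j by auto
        then have "L k < L j" using sm[of k j] jn by simp
        then show ?thesis using L_Suc_Inr0[of j k] Inr j by simp
      qed
    qed
  qed
qed

lemma L_Suc_gt: "1 \<le> j \<Longrightarrow> L j < L (Suc j)"
  using L_mono_aux[of "Suc j"] by simp

lemma L_less: "1 \<le> a \<Longrightarrow> a < b \<Longrightarrow> L a < L b"
proof (induction b)
  case 0 then show ?case by simp
next
  case (Suc b)
  show ?case
  proof (cases "a = b")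
    case True then show ?thesis using L_Suc_gt Suc.prems by simp
  next
    case False
    then have "L a < L b" "1 \<le> b" using Suc by auto
    then show ?thesis using L_Suc_gt[of b] by simp
  qed
qed

lemma L_Suc_Inr: "i \<ge> 1 \<Longrightarrow> psi i = Inr k \<Longrightarrow> L (Suc i) = 2 * L i - L k"
proof -
  assume a: "i \<ge> 1" "psi i = Inr k"
  then have "1 \<le> k" "k < i" using psi_Inr[of i k] by auto
  then have "L k < L i" using L_less by simp
  then show ?thesis using L_Suc_Inr0[OF a] by simp
qed

lemma L_le_iff: "1 \<le> a \<Longrightarrow> 1 \<le> b \<Longrightarrow> L a \<le> L b \<longleftrightarrow> a \<le> b"
  using L_less[of a b] L_less[of b a] by (cases "a < b"; cases "b < a") auto

lemma L_less_iff: "1 \<le> a \<Longrightarrow> 1 \<le> b \<Longrightarrow> L a < L b \<longleftrightarrow> a < b"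
  using L_less[of a b] L_less[of b a] by (cases a b rule: linorder_cases) auto

lemma L_inj: "1 \<le> a \<Longrightarrow> 1 \<le> b \<Longrightarrow> L a = L b \<Longrightarrow> a = b"
  using L_less[of a b] L_less[of b a] by (cases a b rule: linorder_cases) auto

lemma L_ge: "1 \<le> i \<Longrightarrow> L i \<ge> i - 1"
proof (induction i)
  case 0 then show ?case by simp
next
  case (Suc i)
  then show ?case using L_Suc_gt[of i] by (cases "i = 0") auto
qed

lemma prefix_Suc: "1 \<le> i \<Longrightarrow> \<exists>s. P (Suc i) = P i @ s"
  using P_Suc[of i] by (cases "psi i") auto

lemma prefix_le: "1 \<le> i \<Longrightarrow> i \<le> j \<Longrightarrow> \<exists>s. P j = P i @ s"
proof (induction j)
  case 0 then show ?case by simp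
next
  case (Suc j)
  show ?case
  proof (cases "i = Suc j")
    case True then show ?thesis by simp
  next
    case False
    then obtain s where "P j = P i @ s" using Suc by auto
    moreover obtain s' where "P (Suc j) = P j @ s'" using prefix_Suc[of j] Suc.prems False by auto
    ultimately show ?thesis by auto
  qed
qed

lemma nth_agree: "1 \<le> i \<Longrightarrow> 1 \<le> j \<Longrightarrow> x < L i \<Longrightarrow> x < L j \<Longrightarrow> P i ! x = P j ! x"
proof (cases "i \<le> j")
  case True
  assume "1 \<le> i" "x < L i"
  then obtain s where "P j = P i @ s" using prefix_le True by blast
  then show ?thesis using \<open>x < L i\<close> by (simp add: nth_append)
next
  case False
  assume "1 \<le> j" "x < L j"
  then obtain s where "P i = P j @ s" using prefix_le False by (meson nat_le_linear)
  then show ?thesis using \<open>x < L j\<close> by (simp add: nth_append)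
qed

definition W :: "nat \<Rightarrow> 'a" where "W = w_psi psi"

lemma W_nth: "1 \<le> i \<Longrightarrow> x < L i \<Longrightarrow> W x = P i ! x"
proof -
  define w0 where "w0 x = P (Suc (Suc x)) ! x" for x
  have lx: "x < L (Suc (Suc x))" for x using L_ge[of "Suc (Suc x)"] by simp
  have pr: "\<forall>i\<ge>1. \<forall>j<length (assoc_word psi i). w0 j = assoc_word psi i ! j"
    using nth_agree lx unfolding w0_def P_def by (metis le_add1 plus_1_eq_Suc Suc_le_mono le0)
  have "w_psi psi = w0"
    unfolding w_psi_def
  proof (rule the_equality)
    show "\<forall>i\<ge>1. \<forall>j<length (assoc_word psi i). w0 j = assoc_word psi i ! j" by (rule pr)
  next
    fix w assume h: "\<forall>i\<ge>1. \<forall>j<length (assoc_word psi i). w j = assoc_word psi i ! j"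
    show "w = w0"
    proof
      fix x show "w x = w0 x" using h lx unfolding w0_def P_def by simp
    qed
  qed
  then show "1 \<le> i \<Longrightarrow> x < L i \<Longrightarrow> W x = P i ! x"
    using pr unfolding W_def P_def by simp
qed



lemma P_rev: "1 \<le> i \<Longrightarrow> rev (P i) = P i"
proof (induction i rule: less_induct)
  case (less i)
  show ?case
  proof (cases "i = 1")
    case True then show ?thesis by (simp add: P1 P1')
  next
    case False
    then obtain j where j: "i = Suc j" "1 \<le> j" using less.prems by (cases i) auto
    have IHj: "rev (P j) = P j" using less.IH j by simp
    show ?thesis
    proof (cases "psi j")
      case (Inl a)
      then show ?thesis using P_Suc[OF j(2)] IHj j(1) by simp
    next
      case (Inr k)
      then have k: "1 \<le> k" "k < j" using psi_Inr[OF j(2)] by auto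
      have IHk: "rev (P k) = P k" using less.IH k j by simp
      obtain b where b: "P j = P k @ b" using prefix_le[of k j] k by auto
      have Pi: "P i = P k @ b @ b" using P_Suc[OF j(2)] Inr b j(1) by simp
      have "P k @ b = rev b @ P k" using IHj IHk b by (metis rev_append)
      then have "P k @ b @ b = rev b @ rev b @ P k" by (metis append.assoc)
      then show ?thesis using Pi IHk by simp
    qed
  qed
qed

abbreviation pal where "pal \<equiv> palw W"
abbreviation per where "per \<equiv> perw W"

lemma pal_L: "1 \<le> i \<Longrightarrow> pal (L i)"
  unfolding palw_def
proof (intro allI impI)
  fix x assume i: "1 \<le> i" and x: "x < L i"
  have "W x = P i ! x" using W_nth i x by simp
  also have "\<dots> = rev (P i) ! x" using P_rev i by simp
  also have "\<dots> = P i ! (L i - 1 - x)" using x by (simp add: rev_nth)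
  also have "\<dots> = W (L i - 1 - x)" using W_nth i x by simp
  finally show "W x = W (L i - 1 - x)" .
qed

lemma S_Inl: assumes "1 \<le> i" "psi i = Inl a"
  shows "W (L i) = a" "\<And>t. t < L i \<Longrightarrow> W (L i + 1 + t) = W t"
proof -
  have PS: "P (Suc i) = P i @ a # P i" using P_Suc[OF assms(1)] assms(2) by simp
  have "W (L i) = P (Suc i) ! L i" using W_nth[of "Suc i" "L i"] PS by simp
  then show "W (L i) = a" using PS by (simp add: nth_append)
  fix t assume t: "t < L i"
  have "W (L i + 1 + t) = P (Suc i) ! (L i + 1 + t)" using W_nth[of "Suc i"] PS t by simp
  also have "\<dots> = P i ! t" using PS by (simp add: nth_append)
  also have "\<dots> = W t" using W_nth assms(1) t by simp
  finally show "W (L i + 1 + t) = W t" .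
qed

lemma S_Inr: assumes "1 \<le> i" "psi i = Inr k" "t < L i - L k"
  shows "W (L i + t) = W (L k + t)"
proof -
  have k: "1 \<le> k" "k < i" using psi_Inr[OF assms(1,2)] assms(1) by auto
  have PS: "P (Suc i) = P i @ drop (L k) (P i)" using P_Suc[OF assms(1)] assms(2) by simp
  have "W (L i + t) = P (Suc i) ! (L i + t)" using W_nth[of "Suc i"] PS assms(3) by simp
  also have "\<dots> = P i ! (L k + t)" using PS assms(3) by (simp add: nth_append)
  also have "\<dots> = W (L k + t)" using W_nth assms(1) assms(3) by simp
  finally show ?thesis .
qed


definition d :: "nat \<Rightarrow> nat" where "d i = L (Suc i) - L i"

lemma L_Suc_d: "1 \<le> i \<Longrightarrow> L (Suc i) = L i + d i"
  using L_Suc_gt[of i] unfolding d_def by simp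

lemma tset_iff: "n \<in> tset psi \<longleftrightarrow> 1 \<le> n \<and> (case psi n of Inl _ \<Rightarrow> True | Inr k \<Rightarrow> 1 \<le> k \<and> k + 2 \<le> n)"
  unfolding tset_def by (rule mem_Collect_eq)

lemma one_tset: "1 \<in> tset psi"
proof -
  obtain a where "psi 1 = Inl a" using psi1 by blast
  then show ?thesis unfolding tset_iff by simp
qed

lemma nontset: "2 \<le> n \<Longrightarrow> n \<notin> tset psi \<Longrightarrow> psi n = Inr (n - 1)"
proof -
  assume n: "2 \<le> n" "n \<notin> tset psi"
  show ?thesis
  proof (cases "psi n")
    case (Inl a)
    have "n \<in> tset psi" unfolding tset_iff using Inl n(1) by simp
    then show ?thesis using n(2) by simp
  next
    case (Inr k)
    then have k: "1 \<le> k" "k \<le> n - 1" using psi_Inr[of n k] n by auto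
    have "\<not> (k + 2 \<le> n)"
    proof
      assume "k + 2 \<le> n"
      then have "n \<in> tset psi" unfolding tset_iff using Inr n(1) k by simp
      then show False using n(2) by simp
    qed
    then show ?thesis using Inr k by simp
  qed
qed

lemma tset_Inr: "n \<in> tset psi \<Longrightarrow> psi n = Inr k \<Longrightarrow> 1 \<le> k \<and> k + 2 \<le> n"
  unfolding tset_iff by simp

lemma d_strict: assumes "2 \<le> n" "n \<in> tset psi" shows "d (n - 1) < d n"
proof -
  obtain n' where n': "n = Suc n'" "1 \<le> n'" using assms(1) by (cases n) auto
  have Ln: "L n = L n' + d n'" using L_Suc_d n' by simp
  show ?thesis
  proof (cases "psi n")
    case (Inl a)
    then have "L (Suc n) = 2 * L n + 1" using L_Suc_Inl assms by simp
    then show ?thesis using Ln n' unfolding d_def by simp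
  next
    case (Inr k)
    then have k: "1 \<le> k" "k + 2 \<le> n" using tset_Inr assms(2) by auto
    then have "L k < L n'" using L_less[of k n'] n' by simp
    moreover have "L (Suc n) = 2 * L n - L k" using L_Suc_Inr Inr assms by simp
    ultimately show ?thesis using Ln n' unfolding d_def by simp
  qed
qed

lemma d_eq: assumes "2 \<le> n" "psi n = Inr (n - 1)" shows "d n = d (n - 1)"
proof -
  obtain n' where n': "n = Suc n'" "1 \<le> n'" using assms(1) by (cases n) auto
  have Ln: "L n = L n' + d n'" using L_Suc_d n' by simp
  have "L (Suc n) = 2 * L n - L n'" using L_Suc_Inr assms n' by simp
  then show ?thesis using Ln n' unfolding d_def by simp
qed

lemma d_mono: "1 \<le> i \<Longrightarrow> i \<le> j \<Longrightarrow> d i \<le> d j"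
proof (induction j)
  case 0 then show ?case by simp
next
  case (Suc j)
  show ?case
  proof (cases "i = Suc j")
    case True then show ?thesis by simp
  next
    case False
    then have "d i \<le> d j" using Suc by simp
    moreover have "d j \<le> d (Suc j)"
    proof (cases "Suc j \<in> tset psi")
      case True then show ?thesis using d_strict[of "Suc j"] Suc.prems False by simp
    next
      case False2: False
      then show ?thesis using nontset[of "Suc j"] d_eq[of "Suc j"] Suc.prems False by simp
    qed
    ultimately show ?thesis by simp
  qed
qed

lemma prev_tset: assumes "2 \<le> n"
  shows "\<exists>m. m \<in> tset psi \<and> 1 \<le> m \<and> m < n \<and> (\<forall>l. m < l \<and> l < n \<longrightarrow> l \<notin> tset psi)"
proof -
  let ?S = "{m. m < n \<and> m \<in> tset psi}"
  have sub: "?S \<subseteq> {..<n}" by blast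
  have fin: "finite ?S" using finite_subset[OF sub] by simp
  have ne: "1 \<in> ?S" using one_tset assms by simp
  define m where "m = Max ?S"
  have mS: "m \<in> ?S" using Max_in[OF fin] ne unfolding m_def by blast
  have ge: "x \<le> m" if "x \<in> ?S" for x using Max_ge[OF fin that] unfolding m_def .
  have nb: "\<forall>l. m < l \<and> l < n \<longrightarrow> l \<notin> tset psi"
  proof (intro allI impI)
    fix l assume l: "m < l \<and> l < n"
    show "l \<notin> tset psi"
    proof
      assume "l \<in> tset psi"
      then have "l \<in> ?S" using l by simp
      then have "l \<le> m" by (rule ge)
      then show False using l by simp
    qed
  qed
  have "1 \<le> m" using ge[OF ne] .
  then show ?thesis using mS nb by blast
qed

lemma between:
  assumes "1 \<le> m" "m \<le> n" "\<And>l. m < l \<Longrightarrow> l < n \<Longrightarrow> psi l = Inr (l - 1)"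
  shows "\<And>l. m \<le> l \<Longrightarrow> l \<le> n \<Longrightarrow> L l = L m + (l - m) * d m"
    and "\<And>l. m \<le> l \<Longrightarrow> l < n \<Longrightarrow> W (L l) = W (L m)"
proof -
  define D where "D = d m"
  have main: "m + t \<le> n \<Longrightarrow> L (m + t) = L m + t * D" for t
  proof (induction t rule: less_induct)
    case (less t)
    show ?case
    proof (cases t)
      case 0 then show ?thesis by simp
    next
      case (Suc t')
      show ?thesis
      proof (cases t')
        case 0 then show ?thesis using Suc L_Suc_d[of m] assms(1) unfolding D_def by simp
      next
        case (Suc t'')
        have mt: "m + t \<le> n" using less.prems .
        have lt1: "m < m + t'" "m + t' < n" using Suc \<open>t = Suc t'\<close> mt by simp_all
        have ps: "psi (m + t') = Inr (m + t' - 1)" using assms(3)[OF lt1] .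
        have m1: "1 \<le> m + t'" using assms(1) by simp
        have e1: "L (Suc (m + t')) = 2 * L (m + t') - L (m + t' - 1)"
          using L_Suc_Inr[OF m1 ps] .
        have e2: "L (m + t') = L m + t' * D" using less.IH[of t'] \<open>t = Suc t'\<close> mt by simp
        have e3: "L (m + t'') = L m + t'' * D" using less.IH[of t''] \<open>t = Suc t'\<close> Suc mt by simp
        have e4: "m + t' - 1 = m + t''" using Suc by simp
        have e5: "2 * (L m + t' * D) = (L m + t'' * D) + (L m + t * D)"
          using Suc \<open>t = Suc t'\<close> by (simp add: algebra_simps)
        have "L (m + t) = L (Suc (m + t'))" using \<open>t = Suc t'\<close> by simp
        also have "\<dots> = 2 * (L m + t' * D) - (L m + t'' * D)" using e1 e2 e3 e4 by simp
        also have "\<dots> = L m + t * D" using e5 by simp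
        finally show ?thesis .
      qed
    qed
  qed
  show "L l = L m + (l - m) * d m" if "m \<le> l" "l \<le> n" for l
  proof -
    have "l = m + (l - m)" using that by simp
    then have "L l = L (m + (l - m))" by simp
    also have "\<dots> = L m + (l - m) * D" using main[of "l - m"] that by simp
    finally show ?thesis unfolding D_def .
  qed
  show "W (L l) = W (L m)" if "m \<le> l" "l < n" for l
    using that
  proof (induction l)
    case 0 then show ?case using assms(1) by simp
  next
    case (Suc l)
    show ?case
    proof (cases "m = Suc l")
      case True then show ?thesis by simp
    next
      case False
      then have ml: "m \<le> l" using Suc.prems by simp
      have lt: "m < Suc l" "Suc l < n" using Suc.prems False by simp_all
      have ps: "psi (Suc l) = Inr l" using assms(3)[OF lt] by simp
      have l1: "1 \<le> Suc l" by simp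
      have "L l < L (Suc l)" using L_Suc_gt[of l] ml assms(1) by simp
      then have t0: "0 < L (Suc l) - L l" by simp
      have "W (L (Suc l) + 0) = W (L l + 0)" using S_Inr[OF l1 ps t0] .
      then show ?thesis using Suc.IH ml Suc.prems by simp
    qed
  qed
qed

end

locale R = F +
  assumes red: "reduced psi"
begin

lemma red_app: assumes "m \<in> tset psi" "n \<in> tset psi" "m < n" "\<forall>l. m < l \<and> l < n \<longrightarrow> l \<notin> tset psi"
  shows "psi n \<noteq> psi m" "\<And>k. psi n = Inr k \<Longrightarrow> k < m"
proof -
  have h: "psi n \<noteq> psi m \<and> (case psi n of Inl _ \<Rightarrow> True | Inr k \<Rightarrow> k < m)"
    using red assms unfolding reduced_def by blast
  then show "psi n \<noteq> psi m" by simp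
  fix k assume "psi n = Inr k"
  then show "k < m" using h by simp
qed

definition AP :: "nat \<Rightarrow> bool" where
  "AP N \<longleftrightarrow> (\<forall>l \<le> L N. pal l \<longrightarrow> (\<exists>i. 1 \<le> i \<and> i \<le> N \<and> l = L i))"

lemma noper: assumes "AP N" "1 \<le> i" "Suc i \<le> N" "per (L (Suc i)) q" "0 < q"
  shows "d i \<le> q"
proof (rule ccontr)
  assume "\<not> d i \<le> q"
  then have q: "q < d i" by simp
  have LS: "L (Suc i) = L i + d i" using L_Suc_d assms(2) by simp
  have "pal (L (Suc i) - q)" using G_palborder[OF pal_L assms(4)] assms(2) q LS by simp
  moreover have "L (Suc i) - q \<le> L N" using L_le_iff[of "Suc i" N] assms by simp
  ultimately obtain j where j: "1 \<le> j" "j \<le> N" "L (Suc i) - q = L j" using assms(1) unfolding AP_def by blast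
  have "L i < L j" "L j < L (Suc i)" using j(3) q LS assms(5) by simp_all
  then have "i < j" "j < Suc i" using L_less_iff j(1) assms(2) by auto
  then show False by simp
qed

lemma lemP: assumes "AP N" "m \<in> tset psi" "2 \<le> m" "Suc m \<le> N"
  shows "L (m - 1) < d m"
proof (rule ccontr)
  assume "\<not> L (m - 1) < d m"
  then have ge: "d m \<le> L (m - 1)" by simp
  define D where "D = d m"
  define d' where "d' = d (m - 1)"
  have dlt: "d' < D" using d_strict assms unfolding D_def d'_def by simp
  have m1: "1 \<le> m - 1" using assms by simp
  have Lm: "L m = L (m - 1) + d'" using L_Suc_d[OF m1] assms(3) unfolding d'_def by simp
  have LSm: "L (Suc m) = L m + D" using L_Suc_d assms unfolding D_def by simp
  have p1: "per (L (Suc m)) D" using G_border[OF pal_L pal_L, of m "Suc m"] assms LSm by simp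
  have p2: "per (L m) D" using G_prefix[OF p1] LSm by simp
  have p3: "per (L m) d'" using G_border[OF pal_L pal_L, of "m - 1" m] assms Lm by simp
  have "per (L m) (gcd D d')" using G_FW[OF p2 p3] Lm ge unfolding D_def by simp
  moreover have "0 < d'" using L_Suc_gt[OF m1] assms(3) unfolding d'_def d_def by simp
  moreover have "0 < D" using dlt by simp
  ultimately have p4: "per (L (Suc m)) (gcd D d')"
    using G_extend[OF p1, of "L m" "gcd D d'"] Lm ge LSm unfolding D_def by simp
  have "D \<le> gcd D d'" using noper[OF assms(1) _ assms(4) p4] assms \<open>0 < d'\<close> unfolding D_def by simp
  moreover have "gcd D d' \<le> d'" using \<open>0 < d'\<close> by (simp add: gcd_le2_nat)
  ultimately show False using dlt by simp
qed


lemma step_false: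
  assumes A: "AP n" and n: "1 \<le> n" and l: "L n < l" "l < L (Suc n)" "pal l"
  shows False
proof (cases "n \<in> tset psi")
  case False
  then have n2: "2 \<le> n" using one_tset n by (cases "n = 1") auto
  have ps: "psi n = Inr (n - 1)" using nontset[OF n2 False] .
  have LS: "L (Suc n) = 2 * L n - L (n - 1)" using L_Suc_Inr[OF n ps] .
  have "pal (2 * L n - l)" using G_refl[OF pal_L[OF n] l(3)] l LS by simp
  moreover have "2 * L n - l \<le> L n" using l by simp
  ultimately obtain i where i: "1 \<le> i" "i \<le> n" "2 * L n - l = L i" using A unfolding AP_def by blast
  have "L (n - 1) < L i" "L i < L n" using i l LS by simp_all
  then have "n - 1 < i" "i < n" using L_less_iff i n2 by auto
  then show False by simp
next
  case True
  have n2: "2 \<le> n"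
  proof (rule ccontr)
    assume "\<not> 2 \<le> n"
    then have "n = 1" using n by simp
    then obtain a where "psi n = Inl a" using psi1 by auto
    then have "L (Suc n) = 1" using L_Suc_Inl[OF n] \<open>n = 1\<close> P1 by simp
    then show False using l \<open>n = 1\<close> P1 by simp
  qed
  obtain m where m: "m \<in> tset psi" "1 \<le> m" "m < n" "\<forall>l. m < l \<and> l < n \<longrightarrow> l \<notin> tset psi"
    using prev_tset[OF n2] by blast
  have btw: "psi l = Inr (l - 1)" if "m < l" "l < n" for l
  proof -
    have "l \<notin> tset psi" using m(4) that by blast
    moreover have "2 \<le> l" using m(2) that by simp
    ultimately show ?thesis using nontset by blast
  qed
  define D where "D = d m"
  have mn: "m \<le> n" using m(3) by simp
  have Lb: "L l = L m + (l - m) * D" if "m \<le> l" "l \<le> n" for l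
    unfolding D_def by (rule between(1)[OF m(2) mn btw that])
  have Wb: "W (L l) = W (L m)" if "m \<le> l" "l < n" for l
    by (rule between(2)[OF m(2) mn btw that])
  have Dpos: "0 < D" using L_Suc_gt[OF m(2)] unfolding D_def d_def by simp
  have n1: "1 \<le> n - 1" "m \<le> n - 1" using n2 m by auto
  have Ln1: "L n = L (n - 1) + D"
  proof -
    have a1: "L n = L m + (n - m) * D" using Lb[of n] m(3) by simp
    have a2: "L (n - 1) = L m + (n - 1 - m) * D" using Lb[of "n - 1"] n1 by simp
    have a3: "n - m = Suc (n - 1 - m)" using m(3) by simp
    show ?thesis using a1 a2 a3 by simp
  qed
  have perLn: "per (L n) D" using G_border[OF pal_L pal_L, of "n - 1" n] n1 n Ln1 by simp
  have dn1: "d (n - 1) = D" using L_Suc_d[OF n1(1)] Ln1 n2 by simp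
  have minper: "\<And>q. 0 < q \<Longrightarrow> per (L n) q \<Longrightarrow> D \<le> q"
    using noper[OF A n1(1)] n2 dn1 by simp
  have LP: "2 \<le> m \<Longrightarrow> L (m - 1) < D" using lemP[OF A m(1)] m(3) unfolding D_def by simp
  have dlt: "2 \<le> m \<Longrightarrow> d (m - 1) < D" using d_strict m(1) unfolding D_def by simp
  have LSm: "L (Suc m) = L m + D" using L_Suc_d[OF m(2)] unfolding D_def .
  have Lsmall: "\<And>k. 1 \<le> k \<Longrightarrow> k < m \<Longrightarrow> L k < D"
  proof -
    fix k assume k: "1 \<le> k" "k < m"
    then have "L k \<le> L (m - 1)" using L_le_iff[of k "m - 1"] by simp
    then show "L k < D" using LP k by simp
  qed
  have LmD: "2 \<le> m \<Longrightarrow> L m < 2 * D"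
  proof -
    assume m2: "2 \<le> m"
    have "L m = L (m - 1) + d (m - 1)" using L_Suc_d[of "m - 1"] m2 by simp
    then show "L m < 2 * D" using LP[OF m2] dlt[OF m2] by simp
  qed
  show False
  proof (cases "psi n")
    case (Inr k)
    have km: "k < m" using red_app(2)[OF m(1) True m(3) m(4) Inr] .
    have k1: "1 \<le> k" using tset_Inr[OF True Inr] by simp
    have m2: "2 \<le> m" using km k1 by simp
    have LS: "L (Suc n) = 2 * L n - L k" using L_Suc_Inr[OF n Inr] .
    have Lkn: "L k < L n" using L_less[OF k1] km m(3) by simp
    have "pal (2 * L n - l)" using G_refl[OF pal_L[OF n] l(3)] l LS by simp
    moreover have "2 * L n - l \<le> L n" using l by simp
    ultimately obtain j where j: "1 \<le> j" "j \<le> n" "2 * L n - l = L j" using A unfolding AP_def by blast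
    have "L k < L j" "L j < L n" using j l LS by simp_all
    then have kj: "k < j" "j < n" using L_less_iff j k1 n by auto
    have lj: "l = 2 * L n - L j" using j(3) l LS by simp
    have perl: "per l (L n - L j)" using G_border[OF pal_L[OF n] l(3)] l lj by simp
    have eq: "\<And>t. t < L n - L j \<Longrightarrow> W (L j + t) = W (L k + t)"
    proof -
      fix t assume t: "t < L n - L j"
      have "L j + t + (L n - L j) < l" using t lj \<open>L j < L n\<close> by simp
      then have "W (L j + t) = W (L j + t + (L n - L j))" using perwD[OF perl] by blast
      also have "L j + t + (L n - L j) = L n + t" using \<open>L j < L n\<close> by simp
      also have "W (L n + t) = W (L k + t)" using S_Inr[OF n Inr] t \<open>L k < L j\<close> by simp
      finally show "W (L j + t) = W (L k + t)" .
    qed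
    have LkD: "L k < D" using Lsmall k1 km by simp
    have LjD: "L j \<le> L n - D" using L_le_iff[of j "n - 1"] kj j n1 Ln1 by simp
    have perf: "per (L n) (L j - L k)"
      using G_glue[of "L k" "L j" "L n" W] \<open>L k < L j\<close> LkD LjD eq pal_L[OF n] by simp
    have fD: "D \<le> L j - L k" using minper[OF _ perf] \<open>L k < L j\<close> by simp
    have jm: "m \<le> j"
    proof (rule ccontr)
      assume "\<not> m \<le> j"
      then have "L j < D" using Lsmall j(1) by simp
      then show False using fD by simp
    qed
    have "per (L n) (gcd D (L j - L k))" using G_FW[OF perLn perf] LjD \<open>L k < L j\<close> by simp
    then have "D \<le> gcd D (L j - L k)" using minper Dpos by simp
    moreover have "gcd D (L j - L k) \<le> D" using Dpos by (intro gcd_le1_nat) simp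
    ultimately have "gcd D (L j - L k) = D" by (rule antisym[rotated])
    then have Ddvd: "D dvd L j - L k" using gcd_dvd2[of D "L j - L k"] by simp
    have LjE: "L j = L m + (j - m) * D" using Lb[of j] jm j by simp
    have Lkm: "L k < L m" using L_less k1 km by simp
    have "L j - L k = (L m - L k) + (j - m) * D" using LjE Lkm by simp
    then have "D dvd (L m - L k)" using Ddvd by (simp add: dvd_add_left_iff)
    moreover have "0 < L m - L k" "L m - L k < 2 * D" using Lkm LmD[OF m2] by simp_all
    ultimately have LmkD: "L m - L k = D"
    proof -
      obtain c where c: "L m - L k = D * c" using \<open>D dvd (L m - L k)\<close> by (auto simp: dvd_def)
      have "c \<noteq> 0" using c \<open>0 < L m - L k\<close> by auto
      moreover have "c < 2" using c \<open>L m - L k < 2 * D\<close> Dpos by (simp add: mult.commute)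
      ultimately have "c = 1" by simp
      then show ?thesis using c by simp
    qed
    show False
    proof (cases "psi m")
      case (Inl b)
      have "L (Suc m) = 2 * L m + 1" using L_Suc_Inl[OF m(2) Inl] .
      then show False using LSm LmkD by simp
    next
      case (Inr k')
      have k'm: "1 \<le> k'" "k' < m" using psi_Inr[OF m(2) Inr] m2 by auto
      have "L (Suc m) = 2 * L m - L k'" using L_Suc_Inr[OF m(2) Inr] .
      moreover have "L k' < L m" using L_less k'm by simp
      ultimately have "L k' = L k" using LSm LmkD by simp
      then have "k' = k" using L_inj k'm k1 by simp
      then show False using red_app(1)[OF m(1) True m(3) m(4)] Inr \<open>psi n = Inr k\<close> by simp
    qed
  next
    case (Inl a)
    have LS: "L (Suc n) = 2 * L n + 1" using L_Suc_Inl[OF n Inl] .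
    have "pal (2 * L n - l)" using G_refl[OF pal_L[OF n] l(3)] l LS by simp
    moreover have "2 * L n - l \<le> L n" using l by simp
    ultimately obtain j where j: "1 \<le> j" "j \<le> n" "2 * L n - l = L j" using A unfolding AP_def by blast
    have Ljn: "L j < L n" using j l LS by simp
    then have jn: "j < n" using L_less_iff j n by auto
    have lj: "l = 2 * L n - L j" using j(3) l LS by simp
    have perl: "per l (L n - L j)" using G_border[OF pal_L[OF n] l(3)] l lj by simp
    have eq: "\<And>t. t < L n - L j \<Longrightarrow> W (L j + t) = W (L n + t)"
    proof -
      fix t assume t: "t < L n - L j"
      have "L j + t + (L n - L j) < l" using t lj Ljn by simp
      then have "W (L j + t) = W (L j + t + (L n - L j))" using perwD[OF perl] by blast
      also have "L j + t + (L n - L j) = L n + t" using Ljn by simp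
      finally show "W (L j + t) = W (L n + t)" .
    qed
    have Wj: "W (L j) = a" using eq[of 0] Ljn S_Inl(1)[OF n Inl] by simp
    have perj: "per (L n) (L j + 1)" unfolding perw_def
    proof (intro allI impI)
      fix x assume x: "x + (L j + 1) < L n"
      have "W (x + (L j + 1)) = W (L j + (x + 1))" by (simp add: algebra_simps)
      also have "\<dots> = W (L n + (x + 1))" using eq[of "x + 1"] x by simp
      also have "\<dots> = W (L n + 1 + x)" by (simp add: algebra_simps)
      also have "\<dots> = W x" using S_Inl(2)[OF n Inl, of x] x by simp
      finally show "W x = W (x + (L j + 1))" by simp
    qed
    have "pal (L n - (L j + 1))" using G_palborder[OF pal_L[OF n] perj] Ljn by simp
    moreover have "L n - (L j + 1) \<le> L n" by simp
    ultimately obtain i where i: "1 \<le> i" "i \<le> n" "L n - (L j + 1) = L i" using A unfolding AP_def by blast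
    have Lin: "L i < L n" using i Ljn by simp
    then have inn: "i < n" using L_less_iff i n by auto
    have sum: "L i + L j + 1 = L n" using i Ljn by simp
    have Wi: "W (L i) = a"
    proof -
      have "W (L i) = W (L n - 1 - L i)" using pal_L[OF n] Lin unfolding palw_def by blast
      also have "L n - 1 - L i = L j" using sum by simp
      finally show ?thesis using Wj by simp
    qed
    have key: "D dvd L m + 1 \<and> j' = n - 1"
      if h: "1 \<le> i'" "i' < n" "1 \<le> j'" "j' < n" "L i' + L j' + 1 = L n" "i' < m" for i' j'
    proof -
      have m2: "2 \<le> m" using h by simp
      have LiD: "L i' < D" using Lsmall h by simp
      have "L (n - 1) \<le> L j'" using h LiD Ln1 by simp
      then have "n - 1 \<le> j'" using L_le_iff[of "n - 1" j'] n1 h by simp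
      then have jn1: "j' = n - 1" using h by simp
      then have LiD1: "L i' = D - 1" using h Ln1 by simp
      have "L i' \<le> L (m - 1)" using L_le_iff[of i' "m - 1"] h by simp
      then have Lm1: "L (m - 1) = D - 1" using LP[OF m2] LiD1 by simp
      have "L m > L (m - 1)" using L_less[of "m - 1" m] m2 by simp
      then have LmD: "L m \<ge> D" using Lm1 Dpos by simp
      have "L (Suc m) \<le> L n" using L_le_iff[of "Suc m" n] m n by simp
      then have le: "2 * D - 1 \<le> L n" using LSm LmD by simp
      have p2: "per (2 * D - 1) D" using G_prefix[OF perLn le] .
      have pm: "pal (D - 1)" using pal_L[of "m - 1"] Lm1 m2 by simp
      have e: "2 * D - 1 = (D - 1) + D" using Dpos by simp
      have e2: "D \<le> (D - 1) + 1" by simp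
      have pp: "pal (2 * D - 1)" by (rule G_ext[OF pm p2 e e2])
      have "\<exists>i. 1 \<le> i \<and> i \<le> n \<and> 2 * D - 1 = L i" using A[unfolded AP_def, rule_format, OF le pp] .
      then obtain r where r: "1 \<le> r" "r \<le> n" "L r = 2 * D - 1" by auto
      have "L (m - 1) < L r" "L r < L (Suc m)" using r Lm1 LSm LmD Dpos by simp_all
      then have "m - 1 < r" "r < Suc m" using L_less_iff r(1) m2 by auto
      then have "r = m" by simp
      then have "L m + 1 = 2 * D" using r Dpos by simp
      then show ?thesis using jn1 by simp
    qed
    have C: "D dvd L m + 1 \<and> W (L m) = a"
    proof (cases "i < m")
      case True
      then have "D dvd L m + 1 \<and> j = n - 1" using key[of i j] i j inn jn sum by simp
      then show ?thesis using Wb[of "n - 1"] n1 n2 Wj by simp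
    next
      case False
      show ?thesis
      proof (cases "j < m")
        case True
        then have "D dvd L m + 1 \<and> i = n - 1" using key[of j i] i j inn jn sum by simp
        then show ?thesis using Wb[of "n - 1"] n1 n2 Wi by simp
      next
        case False2: False
        have Li: "L i = L m + (i - m) * D" using Lb[of i] False i by simp
        have Lj: "L j = L m + (j - m) * D" using Lb[of j] False2 j by simp
        have Ln: "L n = L m + (n - m) * D" using Lb[of n] m(3) by simp
        have "L m + 1 + ((i - m) + (j - m)) * D = (n - m) * D" using sum Li Lj Ln by (simp add: algebra_simps)
        then have "L m + 1 = (n - m) * D - ((i - m) + (j - m)) * D" by simp
        then have "D dvd L m + 1" using dvd_diff_nat[of D "(n - m) * D" "((i - m) + (j - m)) * D"] by simp
        moreover have "W (L m) = a" using Wb[of j] False2 jn Wj by simp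
        ultimately show ?thesis by simp
      qed
    qed
    show False
    proof (cases "psi m")
      case (Inl b)
      have "W (L m) = b" using S_Inl(1)[OF m(2) Inl] .
      then have "psi m = psi n" using C Inl \<open>psi n = Inl a\<close> by simp
      then show False using red_app(1)[OF m(1) True m(3) m(4)] by simp
    next
      case (Inr k')
      have m2: "2 \<le> m" using psi1 Inr m(2) by (cases "m = 1") auto
      have k': "1 \<le> k'" "k' + 2 \<le> m" using tset_Inr[OF m(1) Inr] by auto
      have "L (Suc m) = 2 * L m - L k'" using L_Suc_Inr[OF m(2) Inr] .
      moreover have "L k' < L m" using L_less k' by simp
      ultimately have Dk: "L m = L k' + D" using LSm by simp
      have LkD: "L k' < D" using Lsmall k' by simp
      have "D dvd (L k' + 1) + D" using C Dk by (simp add: algebra_simps)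
      then have "D dvd L k' + 1" using dvd_add_left_iff[of D D "L k' + 1"] by simp
      then have "D \<le> L k' + 1" by (simp add: dvd_imp_le)
      then have "L k' + 1 = D" using LkD by simp
      moreover have "L k' \<le> L (m - 1)" using L_le_iff[of k' "m - 1"] k' by simp
      ultimately have "L k' = L (m - 1)" using LP[OF m2] by simp
      then have "k' = m - 1" using L_inj k' m2 by simp
      then show False using k' by simp
    qed
  qed
qed


lemma AP_all: "1 \<le> n \<Longrightarrow> AP n"
proof (induction n)
  case 0 then show ?case by simp
next
  case (Suc n)
  show ?case
  proof (cases "n = 0")
    case True
    then show ?thesis unfolding AP_def using P1 by auto
  next
    case False
    then have n: "1 \<le> n" by simp
    have IH: "AP n" using Suc.IH n by simp
    show ?thesis unfolding AP_def
    proof (intro allI impI)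
      fix l assume l: "l \<le> L (Suc n)" "pal l"
      show "\<exists>i. 1 \<le> i \<and> i \<le> Suc n \<and> l = L i"
      proof (cases "l \<le> L n")
        case True
        then show ?thesis using IH l unfolding AP_def by fastforce
      next
        case False
        show ?thesis
        proof (cases "l = L (Suc n)")
          case True then show ?thesis by auto
        next
          case False2: False
          then show ?thesis using step_false[OF IH n, of l] False l by simp
        qed
      qed
    qed
  qed
qed

lemma periodic_imp: assumes "periodic_word W" shows "\<exists>N. \<forall>n\<ge>N. psi n = Inr (n - 1)"
proof (rule ccontr)
  assume nex: "\<not> (\<exists>N. \<forall>n\<ge>N. psi n = Inr (n - 1))"
  obtain p where p: "0 < p" "\<forall>n. W (n + p) = W n" using assms unfolding periodic_word_def by blast
  have bnd: "d n \<le> p" if "1 \<le> n" for n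
  proof -
    have "per (L (Suc n)) p" unfolding perw_def using p(2) by (simp add: add.commute)
    then show ?thesis using noper[OF AP_all[of "Suc n"] that _ _ p(1)] by simp
  qed
  have unb: "\<exists>n\<ge>1. c < d n" for c
  proof (induction c)
    case 0
    have "0 < d 1" using L_Suc_gt[of 1] unfolding d_def by simp
    then show ?case by blast
  next
    case (Suc c)
    then obtain n where n: "1 \<le> n" "c < d n" by blast
    obtain n' where n': "n' \<ge> Suc n" "psi n' \<noteq> Inr (n' - 1)" using nex by blast
    have n'2: "2 \<le> n'" using n n' by simp
    have "n' \<in> tset psi" using nontset[OF n'2] n' by blast
    then have "d (n' - 1) < d n'" using d_strict n'2 by simp
    moreover have "d n \<le> d (n' - 1)" using d_mono[of n "n' - 1"] n n' by simp
    ultimately show ?case using n n'2 by (intro exI[of _ n']) simp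
  qed
  obtain n where "1 \<le> n" "p < d n" using unb by blast
  then show False using bnd by fastforce
qed

end

lemma (in F) imp_periodic: assumes "\<forall>n\<ge>N. psi n = Inr (n - 1)" shows "periodic_word W"
proof -
  define N' where "N' = max N 2"
  have N': "2 \<le> N'" "\<forall>n\<ge>N'. psi n = Inr (n - 1)" using assms unfolding N'_def by auto
  define D where "D = L N' - L (N' - 1)"
  have Dpos: "0 < D" using L_less[of "N' - 1" N'] N' unfolding D_def by simp
  have claim: "per (L (N' + t)) D \<and> L (N' + t) = L (N' + t - 1) + D" for t
  proof (induction t)
    case 0
    have "L (N' - 1) < L N'" using L_less[of "N' - 1" N'] N' by simp
    then show ?case using G_border[OF pal_L pal_L, of "N' - 1" N'] N' unfolding D_def by simp
  next
    case (Suc t)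
    define n where "n = N' + t"
    have n1: "1 \<le> n" using N' unfolding n_def by simp
    have ps: "psi n = Inr (n - 1)" using N' unfolding n_def by simp
    have LS: "L (Suc n) = 2 * L n - L (n - 1)" using L_Suc_Inr[OF n1 ps] .
    have IH0: "per (L n) D \<and> L n = L (n - 1) + D" using Suc.IH unfolding n_def .
    have IH: "per (L n) D" "L n = L (n - 1) + D" using IH0 by blast+
    have LS': "L (Suc n) = L n + D" using LS IH by simp
    have pS: "per (L (Suc n)) D" unfolding perw_def
    proof (intro allI impI)
      fix x assume x: "x + D < L (Suc n)"
      show "W x = W (x + D)"
      proof (cases "x + D < L n")
        case True show ?thesis by (rule perwD[OF IH(1) True])
      next
        case False
        define t' where "t' = x + D - L n"
        have t': "t' < L n - L (n - 1)" using x LS' IH(2) False unfolding t'_def by simp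
        have "W (L n + t') = W (L (n - 1) + t')" using S_Inr[OF n1 ps t'] .
        moreover have "L n + t' = x + D" using False unfolding t'_def by simp
        moreover have "L (n - 1) + t' = x" using False IH(2) unfolding t'_def by simp
        ultimately show ?thesis by simp
      qed
    qed
    have e1: "N' + Suc t = Suc n" "N' + Suc t - 1 = n" unfolding n_def by simp_all
    have e3: "Suc n - 1 = n" by simp
    show ?case unfolding e1 e3 using pS LS' by blast
  qed
  have "W (x + D) = W x" for x
  proof -
    have "L (N' + (x + D + 1)) \<ge> N' + (x + D + 1) - 1" using L_ge[of "N' + (x + D + 1)"] N' by simp
    then have "x + D < L (N' + (x + D + 1))" using N' by simp
    then show ?thesis using perwD[OF conjunct1[OF claim[of "x + D + 1"]]] by simp
  qed
  then show ?thesis unfolding periodic_word_def using Dpos by blast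
qed

theorem corollary4p13:
  fixes psi :: "nat \<Rightarrow> 'a + nat"
  assumes "is_function psi"
    and "reduced psi"
  shows "periodic_word (w_psi psi) \<longleftrightarrow> (\<exists>N. \<forall>n\<ge>N. psi n = Inr (n - 1))"
proof -
  interpret R psi using assms by (unfold_locales)
  show ?thesis using periodic_imp imp_periodic unfolding W_def by blast
qed

end
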